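(* Let $A$ be a simple marked arrangement of $n$ pseudolines, drawn as a wiring diagram, and let $m,k,u,m',k',u'$ be nonnegative integers with $k \leq m$ and $k \leq n-u$. Then \[|\Gamma(m,k,u,m',k',u')| \leq \binom{n-u}{k}\left(\frac{m}{n-u}\right)^k 2^{n-k-u}.\] Symmetrically, if $k' \leq m'$ and $k' \leq n-u'$, then \[|\Gamma(m,k,u,m',k',u')| \leq \binom{n-u'}{k'}\left(\frac{m'}{n-u'}\right)^{k'} 2^{n-k'-u'}.\]
   Context: An arrangement of pseudolines is a finite set of simple curves in the plane, each extending to infinity in both directions, every two intersecting in exactly one point where they cross; simple means no three share a point; marked means an unbounded cell is distinguished as the north-cell, and the south-cell is the cell on the opposite side of every pseudoline. The arrangement is drawn as a wiring diagram: the pseudolines lie on $n$ horizontal wires except near crossings, where two pseudolines on neighboring wires swap wires; the north-cell is the cell above all wires and the south-cell the cell below all wires. A cutpath is a directed path from the north-cell to the south-cell in the dual graph (vertices are cells, edges correspond to shared pseudoline edges, oriented from north side to south side); equivalently, a cutpath moves from cell to cell, each time leaving the current cell by crossing one of the pseudolines bounding it from below. For a cell $c$, let $d$ be the number of edges bounding it from below ("exits"), labelled $1,\dots,d$ from left to right. If $d=1$ the single exit is the unique exit of $c$; if $d\geq 2$, exit $1$ is the left exit, exit $d$ the right exit, and exits $2,\dots,d-1$ are middle exits. The reversed view of a cutpath is obtained by rotating the plane by $180$ degrees (so the south-cell becomes the top cell) and reading the cutpath from the south-cell to the north-cell, with exits defined in the same way in the rotated picture. $\Gamma(m,k,u,m',k',u')$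 is the set of cutpaths of $A$ such that, viewed from the north-cell to the south-cell, the number of middle exits taken is $k$, the number of unique exits taken is $u$, and the total number of middle exits of all visited cells (taken or not) is $m$; and in the reversed view the corresponding numbers are $k'$, $u'$, $m'$. *)

theory Defs
  imports Main Complex_Main
begin

text \<open>
Wiring diagram of n pseudolines: wire positions 1..n numbered from top to bottom.
A word w lists the crossings from left to right; entry p (1 <= p < n) at index t means
that at time t the pseudolines on wire positions p and p+1 swap.
lines_at w t maps a wire position to the pseudoline lying on it before crossing t.
\<close>

definition lines_at :: "nat list \<Rightarrow> nat \<Rightarrow> nat \<Rightarrow> nat" where
  "lines_at w t = foldl (\<lambda>\<sigma> p. \<sigma>(p := \<sigma> (Suc p), Suc p := \<sigma> p)) id (take t w)"

text \<open>Every two pseudolines cross exactly once (simple: one crossing per time step).\<close>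
definition wiring_diagram :: "nat \<Rightarrow> nat list \<Rightarrow> bool" where
  "wiring_diagram n w \<longleftrightarrow> set w \<subseteq> {1..<n} \<and>
     (\<forall>a b. 1 \<le> a \<and> a < b \<and> b \<le> n \<longrightarrow>
        card {t. t < length w \<and>
                 {lines_at w t (w ! t), lines_at w t (Suc (w ! t))} = {a, b}} = 1)"

text \<open>
Slots s = 0..length w are the vertical gaps between consecutive crossings (slot s lies
between crossing s-1 and crossing s).  Level j (0..n) is the region between wire positions
j and j+1 (level 0: above all wires, level n: below all wires).  A cell is a pair
(level, set of slots it spans); level-j cells are separated by crossings at position j.
\<close>

definition cell_slots :: "nat list \<Rightarrow> nat \<Rightarrow> nat \<Rightarrow> nat set" where
  "cell_slots w j s = {s'. s' \<le> length w \<and>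
      (\<forall>t. min s s' \<le> t \<and> t < max s s' \<longrightarrow> w ! t \<noteq> j)}"

definition cellc :: "nat list \<Rightarrow> nat \<Rightarrow> nat \<Rightarrow> nat \<times> nat set" where
  "cellc w j s = (j, cell_slots w j s)"

definition north_cell :: "nat list \<Rightarrow> nat \<times> nat set" where
  "north_cell w = cellc w 0 0"

definition south_cell :: "nat \<Rightarrow> nat list \<Rightarrow> nat \<times> nat set" where
  "south_cell n w = cellc w n 0"

text \<open>Exits of a cell: the cells just below it sharing an edge of its lower boundary
(one per edge bounding it from below).\<close>
definition exits :: "nat \<Rightarrow> nat list \<Rightarrow> nat \<times> nat set \<Rightarrow> (nat \<times> nat set) set" where
  "exits n w c = (if fst c < n then (\<lambda>s. cellc w (Suc (fst c)) s) ` snd c else {})"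

definition exit_index :: "nat \<Rightarrow> nat list \<Rightarrow> nat \<times> nat set \<Rightarrow> nat \<times> nat set \<Rightarrow> nat" where
  "exit_index n w c e = Suc (card {e' \<in> exits n w c. Min (snd e') < Min (snd e)})"

definition is_middle_exit :: "nat \<Rightarrow> nat list \<Rightarrow> nat \<times> nat set \<Rightarrow> nat \<times> nat set \<Rightarrow> bool" where
  "is_middle_exit n w c e \<longleftrightarrow> e \<in> exits n w c \<and> 2 \<le> card (exits n w c) \<and>
     2 \<le> exit_index n w c e \<and> exit_index n w c e \<le> card (exits n w c) - 1"

definition is_unique_exit :: "nat \<Rightarrow> nat list \<Rightarrow> nat \<times> nat set \<Rightarrow> nat \<times> nat set \<Rightarrow> bool" where
  "is_unique_exit n w c e \<longleftrightarrow> e \<in> exits n w c \<and> card (exits n w c) = 1"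

definition num_middle :: "nat \<Rightarrow> nat list \<Rightarrow> nat \<times> nat set \<Rightarrow> nat" where
  "num_middle n w c = card {e \<in> exits n w c. is_middle_exit n w c e}"

definition cutpath :: "nat \<Rightarrow> nat list \<Rightarrow> (nat \<times> nat set) list \<Rightarrow> bool" where
  "cutpath n w cs \<longleftrightarrow> length cs = Suc n \<and> cs ! 0 = north_cell w \<and> cs ! n = south_cell n w \<and>
     (\<forall>i<n. cs ! Suc i \<in> exits n w (cs ! i))"

text \<open>(m, k, u): total middle exits of visited cells, middle exits taken, unique exits taken.\<close>
definition path_stats :: "nat \<Rightarrow> nat list \<Rightarrow> (nat \<times> nat set) list \<Rightarrow> nat \<times> nat \<times> nat" where
  "path_stats n w cs =
     (sum_list (map (num_middle n w) cs),
      card {i. i < n \<and> is_middle_exit n w (cs ! i) (cs ! Suc i)},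
      card {i. i < n \<and> is_unique_exit n w (cs ! i) (cs ! Suc i)})"

text \<open>Rotation of the plane by 180 degrees: wiring diagram, and cells.\<close>
definition rot_word :: "nat \<Rightarrow> nat list \<Rightarrow> nat list" where
  "rot_word n w = rev (map (\<lambda>p. n - p) w)"

definition rot_cell :: "nat \<Rightarrow> nat list \<Rightarrow> nat \<times> nat set \<Rightarrow> nat \<times> nat set" where
  "rot_cell n w c = (n - fst c, (\<lambda>s. length w - s) ` snd c)"

definition Gamma :: "nat \<Rightarrow> nat list \<Rightarrow> nat \<Rightarrow> nat \<Rightarrow> nat \<Rightarrow> nat \<Rightarrow> nat \<Rightarrow> nat
    \<Rightarrow> (nat \<times> nat set) list set" where
  "Gamma n w m k u m' k' u' = {cs. cutpath n w cs \<and> path_stats n w cs = (m, k, u) \<and>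
      path_stats n (rot_word n w) (rev (map (rot_cell n w) cs)) = (m', k', u')}"

end

theory Submission
  imports Defs
begin

definition bnd :: "nat \<Rightarrow> nat \<Rightarrow> nat \<Rightarrow> nat \<Rightarrow> real" where
  "bnd L u m k = (if u + k \<le> L then real ((L - u) choose k) * (real m / real (L - u)) ^ k * 2 ^ (L - u - k) else 0)"

lemma bnd_nonneg: "0 \<le> bnd L u m k" unfolding bnd_def by simp

lemma cell_slots_le: "s' \<in> cell_slots w j s \<Longrightarrow> s' \<le> length w"
  unfolding cell_slots_def by simp

lemma cell_slots_self: "s \<le> length w \<Longrightarrow> s \<in> cell_slots w j s"
  unfolding cell_slots_def by simp

lemma interval_trans:
  fixes a b c :: nat
  assumes "\<forall>t. min a b \<le> t \<and> t < max a b \<longrightarrow> Q t"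
      and "\<forall>t. min b c \<le> t \<and> t < max b c \<longrightarrow> Q t"
    shows "\<forall>t. min a c \<le> t \<and> t < max a c \<longrightarrow> Q t"
proof (intro allI impI)
  fix t :: nat assume h: "min a c \<le> t \<and> t < max a c"
  then have "(min a b \<le> t \<and> t < max a b) \<or> (min b c \<le> t \<and> t < max b c)"
    by (auto simp: min_def max_def split: if_splits)
  then show "Q t" using assms by blast
qed

lemma interval_sym: "min a b = min b a" "max a b = max b a" for a b :: nat
  by auto

lemma cell_slots_eq:
  assumes "s' \<in> cell_slots w j s"
  shows "cell_slots w j s' = cell_slots w j s"
proof -
  have A: "\<forall>t. min s s' \<le> t \<and> t < max s s' \<longrightarrow> w ! t \<noteq> j"
    using assms unfolding cell_slots_def by simp
  then have A': "\<forall>t. min s' s \<le> t \<and> t < max s' s \<longrightarrow> w ! t \<noteq> j"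
    by (simp add: interval_sym)
  show ?thesis
  proof (rule set_eqI)
    fix x
    show "x \<in> cell_slots w j s' \<longleftrightarrow> x \<in> cell_slots w j s"
    proof
      assume "x \<in> cell_slots w j s'"
      then show "x \<in> cell_slots w j s"
        unfolding cell_slots_def using interval_trans[OF A, of x] by simp
    next
      assume "x \<in> cell_slots w j s"
      then show "x \<in> cell_slots w j s'"
        unfolding cell_slots_def using interval_trans[OF A', of x] by simp
    qed
  qed
qed

definition gcell :: "nat list \<Rightarrow> nat \<times> nat set \<Rightarrow> bool" where
  "gcell w c \<longleftrightarrow> (\<exists>j s. s \<le> length w \<and> c = cellc w j s)"

lemma gcell_snd: "gcell w c \<Longrightarrow> s \<in> snd c \<Longrightarrow> s \<le> length w"
  unfolding gcell_def cellc_def by (auto dest: cell_slots_le)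

lemma exits_gcell: "gcell w c \<Longrightarrow> e \<in> exits n w c \<Longrightarrow> gcell w e"
proof -
  assume g: "gcell w c" and e: "e \<in> exits n w c"
  then obtain s where "s \<in> snd c" "e = cellc w (Suc (fst c)) s"
    unfolding exits_def by (auto split: if_splits)
  then show ?thesis using gcell_snd[OF g] unfolding gcell_def by blast
qed

lemma finite_exits: "finite (exits n w c)"
proof -
  have "exits n w c \<subseteq> {Suc (fst c)} \<times> Pow {..length w}"
    unfolding exits_def cellc_def by (auto dest: cell_slots_le)
  then show ?thesis by (rule finite_subset) auto
qed

lemma exits_tie:
  assumes g: "gcell w c" and "e1 \<in> exits n w c" "e2 \<in> exits n w c" "Min (snd e1) = Min (snd e2)"
  shows "e1 = e2"
proof -
  obtain s1 where s1: "s1 \<le> length w" "e1 = cellc w (Suc (fst c)) s1"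
    using assms(2) g unfolding exits_def by (auto split: if_splits dest: gcell_snd)
  obtain s2 where s2: "s2 \<le> length w" "e2 = cellc w (Suc (fst c)) s2"
    using assms(3) g unfolding exits_def by (auto split: if_splits dest: gcell_snd)
  define j where "j = Suc (fst c)"
  have f: "finite (cell_slots w j s)" for s
    by (rule finite_subset[of _ "{..length w}"]) (auto dest: cell_slots_le)
  have ne1: "s1 \<in> cell_slots w j s1" using s1 cell_slots_self by blast
  have ne2: "s2 \<in> cell_slots w j s2" using s2 cell_slots_self by blast
  define t where "t = Min (cell_slots w j s1)"
  have t1: "t \<in> cell_slots w j s1" unfolding t_def using f ne1 by (intro Min_in) auto
  have t2: "t \<in> cell_slots w j s2" using assms(4) unfolding t_def s1 s2 cellc_def j_def
    using f ne2 by (metis Min_in empty_iff j_def snd_conv)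
  show ?thesis using cell_slots_eq[OF t1] cell_slots_eq[OF t2] s1 s2
    unfolding cellc_def j_def by simp
qed

lemma nonmiddle_le2:
  assumes g: "gcell w c" and "2 \<le> card (exits n w c)"
  shows "card {e \<in> exits n w c. \<not> is_middle_exit n w c e} \<le> 2"
proof -
  define E where "E = exits n w c"
  define d where "d = card E"
  have fE: "finite E" unfolding E_def by (rule finite_exits)
  define I where "I e = card {e' \<in> E. Min (snd e') < Min (snd e)}" for e :: "nat \<times> nat set"
  have idx: "exit_index n w c e = Suc (I e)" for e
    unfolding exit_index_def I_def E_def by simp
  have sub: "{e \<in> E. \<not> is_middle_exit n w c e} \<subseteq> {e \<in> E. I e = 0} \<union> {e \<in> E. d - 1 \<le> I e}"
    using assms unfolding is_middle_exit_def idx E_def d_def by auto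
  have c1: "card {e \<in> E. I e = 0} \<le> 1"
  proof -
    have "\<forall>a1\<in>{e \<in> E. I e = 0}. \<forall>a2\<in>{e \<in> E. I e = 0}. a1 = a2"
    proof (intro ballI)
      fix a1 a2 assume a1: "a1 \<in> {e \<in> E. I e = 0}" and a2: "a2 \<in> {e \<in> E. I e = 0}"
      have "{e' \<in> E. Min (snd e') < Min (snd a1)} = {}"
        using a1 fE unfolding I_def by simp
      then have x1: "\<not> Min (snd a2) < Min (snd a1)" using a2 by blast
      have "{e' \<in> E. Min (snd e') < Min (snd a2)} = {}"
        using a2 fE unfolding I_def by simp
      then have x2: "\<not> Min (snd a1) < Min (snd a2)" using a1 by blast
      show "a1 = a2" using exits_tie[OF g, of a1 n a2] a1 a2 x1 x2 unfolding E_def by simp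
    qed
    moreover have fin: "finite {e \<in> E. I e = 0}" using fE by simp
    ultimately show ?thesis using card_le_Suc0_iff_eq[OF fin] by simp
  qed
  have c2: "card {e \<in> E. d - 1 \<le> I e} \<le> 1"
  proof -
    have key: "{e' \<in> E. Min (snd e') < Min (snd e)} = E - {e}" if "e \<in> E" "d - 1 \<le> I e" for e
    proof (rule card_subset_eq)
      show "finite (E - {e})" using fE by simp
      show "{e' \<in> E. Min (snd e') < Min (snd e)} \<subseteq> E - {e}" by auto
      have "card (E - {e}) = d - 1" using that fE unfolding d_def by simp
      moreover have "card {e' \<in> E. Min (snd e') < Min (snd e)} \<le> card (E - {e})"
        using fE by (intro card_mono) auto
      ultimately show "card {e' \<in> E. Min (snd e') < Min (snd e)} = card (E - {e})"
        using that assms unfolding I_def d_def E_def by linarith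
    qed
    have "\<forall>a1\<in>{e \<in> E. d - 1 \<le> I e}. \<forall>a2\<in>{e \<in> E. d - 1 \<le> I e}. a1 = a2"
    proof (intro ballI, rule ccontr)
      fix a1 a2 assume a1: "a1 \<in> {e \<in> E. d - 1 \<le> I e}" and a2: "a2 \<in> {e \<in> E. d - 1 \<le> I e}"
        and ne: "a1 \<noteq> a2"
      have "Min (snd a2) < Min (snd a1)" using key[of a1] a1 a2 ne by blast
      moreover have "Min (snd a1) < Min (snd a2)" using key[of a2] a1 a2 ne by blast
      ultimately show False by simp
    qed
    moreover have fin: "finite {e \<in> E. d - 1 \<le> I e}" using fE by simp
    ultimately show ?thesis using card_le_Suc0_iff_eq[OF fin] by simp
  qed
  have "card {e \<in> E. \<not> is_middle_exit n w c e} \<le> card ({e \<in> E. I e = 0} \<union> {e \<in> E. d - 1 \<le> I e})"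
    using fE by (intro card_mono[OF _ sub]) auto
  also have "\<dots> \<le> 2" using card_Un_le[of "{e \<in> E. I e = 0}" "{e \<in> E. d - 1 \<le> I e}"] c1 c2 by linarith
  finally show ?thesis unfolding E_def .
qed

definition Pset :: "nat \<Rightarrow> nat list \<Rightarrow> nat \<Rightarrow> nat \<times> nat set \<Rightarrow> nat \<Rightarrow> nat \<Rightarrow> nat
    \<Rightarrow> (nat \<times> nat set) list set" where
  "Pset n w L c m k u = {cs. length cs = Suc L \<and> cs ! 0 = c \<and>
      (\<forall>i<L. cs ! Suc i \<in> exits n w (cs ! i)) \<and>
      sum_list (map (num_middle n w) cs) = m \<and>
      card {i. i < L \<and> is_middle_exit n w (cs ! i) (cs ! Suc i)} = k \<and>
      card {i. i < L \<and> is_unique_exit n w (cs ! i) (cs ! Suc i)} = u}"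

lemma card_less_Suc_split:
  "card {i. i < Suc L \<and> Q i} = (if Q 0 then 1 else 0) + card {i. i < L \<and> Q (Suc i)}"
proof -
  have e: "card {i. i < N \<and> P i} = (\<Sum>i<N. if P i then 1 else 0)" for N and P :: "nat \<Rightarrow> bool"
  proof -
    have "{i. i < N \<and> P i} = {i \<in> {..<N}. P i}" by auto
    then show ?thesis by (simp add: sum.inter_filter[symmetric])
  qed
  show ?thesis unfolding e by (subst sum.lessThan_Suc_shift) simp
qed

lemma tangent_pow:
  fixes t x :: real
  assumes "0 \<le> t" "0 \<le> x"
  shows "real (Suc j) * t * x ^ j - real j * x ^ Suc j \<le> t ^ Suc j"
proof (induction j)
  case 0 then show ?case by simp
next
  case (Suc j)
  have "t ^ Suc (Suc j) = t * t ^ Suc j" by simp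
  also have "\<dots> \<ge> t * (real (Suc j) * t * x ^ j - real j * x ^ Suc j)"
    using Suc assms(1) by (simp add: mult_left_mono)
  finally have h: "t * (real (Suc j) * t * x ^ j - real j * x ^ Suc j) \<le> t ^ Suc (Suc j)" .
  have "t * (real (Suc j) * t * x ^ j - real j * x ^ Suc j)
        - (real (Suc (Suc j)) * t * x ^ Suc j - real (Suc j) * x ^ Suc (Suc j))
        = real (Suc j) * x ^ j * (t - x)^2"
    by (simp add: algebra_simps power2_eq_square)
  moreover have "real (Suc j) * x ^ j * (t - x)^2 \<ge> 0" using assms by simp
  ultimately show ?case using h by linarith
qed

lemma key_ineq:
  fixes x y :: real and p j :: nat
  assumes "0 \<le> x" "0 \<le> y"
  shows "real (p choose Suc j) * x ^ Suc j + y * real (p choose j) * x ^ j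
         \<le> real (Suc p choose Suc j) * ((real p * x + y) / real (Suc p)) ^ Suc j"
proof -
  define t where "t = (real p * x + y) / real (Suc p)"
  have t0: "0 \<le> t" using assms unfolding t_def by simp
  have y: "y = real (Suc p) * t - real p * x" unfolding t_def by (simp add: field_simps)
  define A where "A = real (p choose j)"
  define B where "B = real (p choose Suc j)"
  define C where "C = real (Suc p choose Suc j)"
  have C: "C = A + B" unfolding A_def B_def C_def by simp
  have D: "real (Suc p) * A = real (Suc j) * C"
    unfolding A_def C_def by (metis Suc_times_binomial of_nat_mult)
  have "B * x ^ Suc j + y * A * x ^ j = C * (real (Suc j) * t * x ^ j - real j * x ^ Suc j)"
  proof -
    have "B * x ^ Suc j + y * A * x ^ j = x ^ j * (B * x + (real (Suc p) * A) * t - real p * A * x)"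
      by (simp add: y algebra_simps)
    also have "\<dots> = x ^ j * (real (Suc j) * C * t + (B - real p * A) * x)"
      by (simp only: D) (simp add: algebra_simps)
    also have "B - real p * A = - real j * C"
      using C D by (simp add: algebra_simps)
    finally show ?thesis by (simp add: algebra_simps)
  qed
  also have "\<dots> \<le> C * t ^ Suc j"
    using tangent_pow[OF t0 assms(1), of j] unfolding C_def by (intro mult_left_mono) auto
  finally show ?thesis unfolding A_def B_def C_def t_def .
qed

lemma arith_step:
  assumes am: "a \<le> m"
  shows "real a * (if 1 \<le> k then bnd L u (m - a) (k - 1) else 0) + 2 * bnd L u (m - a) k
         \<le> bnd (Suc L) u m k"
proof (cases "u + k \<le> Suc L")
  case False
  then show ?thesis unfolding bnd_def by auto
next
  case True
  show ?thesis
  proof (cases k)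
    case 0
    show ?thesis
    proof (cases "u \<le> L")
      case True
      then have "Suc L - u = Suc (L - u)" by simp
      then show ?thesis using True 0 unfolding bnd_def by simp
    next
      case False
      then show ?thesis using 0 unfolding bnd_def by simp
    qed
  next
    case (Suc j)
    define p where "p = L - u"
    have uj: "u + j \<le> L" using True Suc by simp
    have sp: "Suc L - u = Suc p" unfolding p_def using uj by simp
    define M where "M = m - a"
    define x where "x = real M / real p"
    have x0: "0 \<le> x" unfolding x_def by simp
    have b1: "bnd L u M j = real (p choose j) * x ^ j * 2 ^ (p - j)"
      unfolding bnd_def p_def x_def using uj by simp
    have b2: "2 * bnd L u M (Suc j) = real (p choose Suc j) * x ^ Suc j * 2 ^ (p - j)"
    proof (cases "Suc j \<le> p")
      case True
      then have "(2::real) * 2 ^ (p - Suc j) = 2 ^ (p - j)"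
        by (metis Suc_diff_Suc Suc_le_lessD power_Suc)
      then show ?thesis unfolding bnd_def p_def x_def using True uj
        by (simp add: p_def algebra_simps)
    next
      case False
      then show ?thesis unfolding bnd_def p_def x_def using uj by (simp add: p_def)
    qed
    have b3: "bnd (Suc L) u m (Suc j) = real (Suc p choose Suc j) * (real m / real (Suc p)) ^ Suc j * 2 ^ (p - j)"
      unfolding bnd_def using sp uj by simp
    have core: "real a * real (p choose j) * x ^ j + real (p choose Suc j) * x ^ Suc j
        \<le> real (Suc p choose Suc j) * (real m / real (Suc p)) ^ Suc j"
    proof (cases "p = 0")
      case True
      then have "j = 0" using uj unfolding p_def by simp
      then show ?thesis using True am by simp
    next
      case False
      have "real p * x + real a = real m" unfolding x_def M_def using False am by simp
      then show ?thesis using key_ineq[OF x0, of "real a" p j] by (simp add: algebra_simps)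
    qed
    have "real a * bnd L u M j + 2 * bnd L u M (Suc j)
        = (real a * real (p choose j) * x ^ j + real (p choose Suc j) * x ^ Suc j) * 2 ^ (p - j)"
      unfolding b1 b2 by (simp add: algebra_simps)
    also have "\<dots> \<le> real (Suc p choose Suc j) * (real m / real (Suc p)) ^ Suc j * 2 ^ (p - j)"
      using core by (intro mult_right_mono) auto
    also have "\<dots> = bnd (Suc L) u m (Suc j)" by (rule b3[symmetric])
    finally show ?thesis using Suc M_def by simp
  qed
qed

lemma main_bound:
  assumes "gcell w c"
  shows "finite (Pset n w L c m k u) \<and> real (card (Pset n w L c m k u)) \<le> bnd L u m k"
  using assms
proof (induction L arbitrary: c m k u)
  case 0
  have sub: "Pset n w 0 c m k u \<subseteq> (if k = 0 \<and> u = 0 then {[c]} else {})"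
  proof
    fix cs assume "cs \<in> Pset n w 0 c m k u"
    then have "length cs = 1" "cs ! 0 = c" "k = 0" "u = 0" unfolding Pset_def by auto
    then show "cs \<in> (if k = 0 \<and> u = 0 then {[c]} else {})"
      by (cases cs) auto
  qed
  have fin: "finite (Pset n w 0 c m k u)"
    by (rule finite_subset[OF sub]) simp
  have "card (Pset n w 0 c m k u) \<le> card (if k = 0 \<and> u = 0 then {[c]} else {} :: (nat \<times> nat set) list set)"
    by (rule card_mono[OF _ sub]) simp
  then show ?case using fin unfolding bnd_def by (auto split: if_splits)
next
  case (Suc L)
  define P where "P = Pset n w (Suc L) c m k u"
  define E where "E = exits n w c"
  define a where "a = num_middle n w c"
  define dm where "dm e = (if is_middle_exit n w c e then 1 else 0::nat)" for e
  define du where "du e = (if is_unique_exit n w c e then 1 else 0::nat)" for e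
  define F where "F e = (if dm e \<le> k \<and> du e \<le> u \<and> a \<le> m
      then bnd L (u - du e) (m - a) (k - dm e) else 0)" for e
  have fE: "finite E" unfolding E_def by (rule finite_exits)
  have decomp: "\<exists>cs'. cs = c # cs' \<and> length cs' = Suc L \<and> cs' ! 0 = e \<and>
      (\<forall>i<L. cs' ! Suc i \<in> exits n w (cs' ! i)) \<and>
      m = a + sum_list (map (num_middle n w) cs') \<and>
      k = dm e + card {i. i < L \<and> is_middle_exit n w (cs' ! i) (cs' ! Suc i)} \<and>
      u = du e + card {i. i < L \<and> is_unique_exit n w (cs' ! i) (cs' ! Suc i)}"
    if cs: "cs \<in> P" "cs ! 1 = e" for cs e
  proof -
    from cs(1) have len: "length cs = Suc (Suc L)" and c0: "cs ! 0 = c"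
      and ch: "\<forall>i<Suc L. cs ! Suc i \<in> exits n w (cs ! i)"
      and sm: "sum_list (map (num_middle n w) cs) = m"
      and km: "card {i. i < Suc L \<and> is_middle_exit n w (cs ! i) (cs ! Suc i)} = k"
      and ku: "card {i. i < Suc L \<and> is_unique_exit n w (cs ! i) (cs ! Suc i)} = u"
      unfolding P_def Pset_def by auto
    obtain cs' where cs': "cs = c # cs'" using len c0 by (cases cs) auto
    have e0: "cs' ! 0 = e" using cs(2) cs' by simp
    show ?thesis
    proof (intro exI conjI)
      show "cs = c # cs'" by (rule cs')
      show "length cs' = Suc L" using len cs' by simp
      show "cs' ! 0 = e" by (rule e0)
      show "\<forall>i<L. cs' ! Suc i \<in> exits n w (cs' ! i)"
      proof (intro allI impI)
        fix i assume "i < L"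
        then have "cs ! Suc (Suc i) \<in> exits n w (cs ! Suc i)" using ch by simp
        then show "cs' ! Suc i \<in> exits n w (cs' ! i)" using cs' by simp
      qed
      show "m = a + sum_list (map (num_middle n w) cs')" using sm cs' a_def by simp
      show "k = dm e + card {i. i < L \<and> is_middle_exit n w (cs' ! i) (cs' ! Suc i)}"
        using km card_less_Suc_split[of L "\<lambda>i. is_middle_exit n w (cs ! i) (cs ! Suc i)"]
        unfolding dm_def cs' using e0 by simp
      show "u = du e + card {i. i < L \<and> is_unique_exit n w (cs' ! i) (cs' ! Suc i)}"
        using ku card_less_Suc_split[of L "\<lambda>i. is_unique_exit n w (cs ! i) (cs ! Suc i)"]
        unfolding du_def cs' using e0 by simp
    qed
  qed
  have piece: "finite {cs \<in> P. cs ! 1 = e} \<and> real (card {cs \<in> P. cs ! 1 = e}) \<le> F e"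
    if e: "e \<in> E" for e
  proof -
    have ge: "gcell w e" using exits_gcell Suc.prems e unfolding E_def by blast
    show ?thesis
    proof (cases "dm e \<le> k \<and> du e \<le> u \<and> a \<le> m")
      case True
      note IH = Suc.IH[OF ge, of "m - a" "k - dm e" "u - du e"]
      have sub: "{cs \<in> P. cs ! 1 = e} \<subseteq> Cons c ` Pset n w L e (m - a) (k - dm e) (u - du e)"
      proof
        fix cs assume "cs \<in> {cs \<in> P. cs ! 1 = e}"
        then obtain cs' where cs': "cs = c # cs'" "length cs' = Suc L" "cs' ! 0 = e"
          "\<forall>i<L. cs' ! Suc i \<in> exits n w (cs' ! i)"
          "m = a + sum_list (map (num_middle n w) cs')"
          "k = dm e + card {i. i < L \<and> is_middle_exit n w (cs' ! i) (cs' ! Suc i)}"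
          "u = du e + card {i. i < L \<and> is_unique_exit n w (cs' ! i) (cs' ! Suc i)}"
          using decomp by blast
        then have "cs' \<in> Pset n w L e (m - a) (k - dm e) (u - du e)"
          unfolding Pset_def by simp
        then show "cs \<in> Cons c ` Pset n w L e (m - a) (k - dm e) (u - du e)"
          using cs'(1) by blast
      qed
      have fin: "finite {cs \<in> P. cs ! 1 = e}"
        using IH by (intro finite_subset[OF sub] finite_imageI) auto
      have "card {cs \<in> P. cs ! 1 = e} \<le> card (Cons c ` Pset n w L e (m - a) (k - dm e) (u - du e))"
        using IH by (intro card_mono[OF _ sub] finite_imageI) auto
      also have "\<dots> \<le> card (Pset n w L e (m - a) (k - dm e) (u - du e))"
        by (rule card_image_le) (use IH in auto)
      finally have "real (card {cs \<in> P. cs ! 1 = e}) \<le> real (card (Pset n w L e (m - a) (k - dm e) (u - du e)))"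
        by simp
      also have "\<dots> \<le> F e" using IH True unfolding F_def by simp
      finally show ?thesis using fin by simp
    next
      case False
      have emp: "{cs \<in> P. cs ! 1 = e} = {}"
      proof (rule ccontr)
        assume "{cs \<in> P. cs ! 1 = e} \<noteq> {}"
        then obtain cs where "cs \<in> P" "cs ! 1 = e" by auto
        from decomp[OF this] False show False by auto
      qed
      have "F e = 0" using False unfolding F_def by auto
      then show ?thesis by (simp only: emp) simp
    qed
  qed
  have Pun: "P = (\<Union>e\<in>E. {cs \<in> P. cs ! 1 = e})"
  proof (intro set_eqI iffI)
    fix cs assume cs: "cs \<in> P"
    then have "cs ! Suc 0 \<in> exits n w (cs ! 0)" "cs ! 0 = c" unfolding P_def Pset_def by auto
    then show "cs \<in> (\<Union>e\<in>E. {cs \<in> P. cs ! 1 = e})" using cs unfolding E_def by auto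
  qed auto
  have finP: "finite P" using fE piece by (subst Pun) (intro finite_UN_I; auto)
  have "card P \<le> (\<Sum>e\<in>E. card {cs \<in> P. cs ! 1 = e})"
    by (subst Pun) (rule card_UN_le[OF fE])
  then have "real (card P) \<le> real (\<Sum>e\<in>E. card {cs \<in> P. cs ! 1 = e})"
    by (rule of_nat_mono)
  also have "\<dots> = (\<Sum>e\<in>E. real (card {cs \<in> P. cs ! 1 = e}))"
    by (rule of_nat_sum)
  also have "\<dots> \<le> (\<Sum>e\<in>E. F e)" using piece by (intro sum_mono) auto
  also have "\<dots> \<le> bnd (Suc L) u m k"
  proof -
    consider "card E = 0" | "card E = 1" | "2 \<le> card E" by linarith
    then show ?thesis
    proof cases
      case 1
      then have "E = {}" using fE by simp
      then show ?thesis using bnd_nonneg by simp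
    next
      case 2
      then obtain e0 where E: "E = {e0}" using card_1_singletonE by blast
      have un: "is_unique_exit n w c e0" unfolding is_unique_exit_def using E E_def 2 by simp
      have nm: "\<not> is_middle_exit n w c e" for e
        unfolding is_middle_exit_def using 2 E_def by simp
      have a0: "a = 0" unfolding a_def num_middle_def using nm by simp
      have "F e0 \<le> bnd (Suc L) u m k"
      proof (cases u)
        case 0
        then show ?thesis unfolding F_def du_def using un bnd_nonneg by simp
      next
        case (Suc u')
        then show ?thesis unfolding F_def du_def dm_def using un nm a0
          by (simp add: bnd_def)
      qed
      then show ?thesis using E by simp
    next
      case 3
      have du0: "du e = 0" for e unfolding du_def is_unique_exit_def using 3 E_def by simp
      define X1 where "X1 = (if 1 \<le> k \<and> a \<le> m then bnd L u (m - a) (k - 1) else 0)"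
      define X0 where "X0 = (if a \<le> m then bnd L u (m - a) k else 0)"
      have FX: "F e = (if is_middle_exit n w c e then X1 else X0)" for e
        unfolding F_def X1_def X0_def du0 dm_def by auto
      have X0: "0 \<le> X0" "0 \<le> X1" unfolding X0_def X1_def using bnd_nonneg by auto
      have cm: "card (E \<inter> {e. is_middle_exit n w c e}) = a"
        unfolding a_def num_middle_def E_def by (simp add: Int_def conj_commute)
      have cn: "card (E \<inter> - {e. is_middle_exit n w c e}) \<le> 2"
      proof -
        have "E \<inter> - {e. is_middle_exit n w c e} = {e \<in> exits n w c. \<not> is_middle_exit n w c e}"
          unfolding E_def by auto
        then show ?thesis using nonmiddle_le2[OF Suc.prems] 3 E_def by simp
      qed
      have "(\<Sum>e\<in>E. F e) = real a * X1 + real (card (E \<inter> - {e. is_middle_exit n w c e})) * X0"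
        unfolding FX using fE by (simp add: sum.If_cases cm)
      also have "\<dots> \<le> real a * X1 + 2 * X0"
        using cn X0 by (intro add_left_mono mult_right_mono) auto
      also have "\<dots> \<le> bnd (Suc L) u m k"
      proof (cases "a \<le> m")
        case True
        then show ?thesis using arith_step[OF True, of k L u] unfolding X1_def X0_def by simp
      next
        case False
        then show ?thesis unfolding X1_def X0_def using bnd_nonneg by simp
      qed
      finally show ?thesis .
    qed
  qed
  finally show ?case using finP unfolding P_def by simp
qed

lemma bnd_final: "bnd n u m k \<le> real ((n - u) choose k) * (real m / real (n - u)) ^ k * 2 ^ (n - k - u)"
  unfolding bnd_def by (auto simp: add.commute)

lemma Gamma_sub: "Gamma n w m k u m' k' u' \<subseteq> Pset n w n (north_cell w) m k u"
  unfolding Gamma_def Pset_def cutpath_def path_stats_def by auto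

lemma gcell_north: "gcell w (north_cell w)"
  unfolding gcell_def north_cell_def by auto

lemma part1:
  "real (card (Gamma n w m k u m' k' u')) \<le> real ((n - u) choose k) * (real m / real (n - u)) ^ k * 2 ^ (n - k - u)"
proof -
  note mb = main_bound[OF gcell_north, of n w n m k u]
  have "card (Gamma n w m k u m' k' u') \<le> card (Pset n w n (north_cell w) m k u)"
    using mb Gamma_sub by (intro card_mono) auto
  then have "real (card (Gamma n w m k u m' k' u')) \<le> real (card (Pset n w n (north_cell w) m k u))"
    by simp
  also have "\<dots> \<le> bnd n u m k" using mb by simp
  finally show ?thesis using bnd_final by (rule order_trans)
qed

lemma rot_len: "length (rot_word n w) = length w"
  unfolding rot_word_def by simp

lemma rot_nth: "t < length w \<Longrightarrow> rot_word n w ! t = n - w ! (length w - Suc t)"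
  unfolding rot_word_def by (simp add: rev_nth)

lemma interval_flip:
  fixes a b t len :: nat
  assumes "a \<le> len" "b \<le> len" "t < len"
  shows "(min a b \<le> t \<and> t < max a b) \<longleftrightarrow>
         (min (len - a) (len - b) \<le> len - Suc t \<and> len - Suc t < max (len - a) (len - b))"
  using assms by (auto simp: min_def max_def)

lemma max_le_len: "a \<le> len \<Longrightarrow> b \<le> len \<Longrightarrow> t < max a b \<Longrightarrow> t < (len::nat)"
  by (auto simp: max_def split: if_splits)

lemma rot_cell_slots:
  assumes W: "set w \<subseteq> {1..<n}" and j: "j \<le> n" and s: "s \<le> length w"
  shows "(\<lambda>s. length w - s) ` cell_slots w j s = cell_slots (rot_word n w) (n - j) (length w - s)"
proof -
  define len where "len = length w"
  define w' where "w' = rot_word n w"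
  have wl: "t < len \<Longrightarrow> 1 \<le> w ! t \<and> w ! t < n" for t
    using W unfolding len_def by (meson atLeastLessThan_iff nth_mem subsetD)
  have eqv: "t < len \<Longrightarrow> (w' ! (len - Suc t) = n - j) \<longleftrightarrow> (w ! t = j)" for t
  proof -
    assume t: "t < len"
    have "len - Suc (len - Suc t) = t" using t by simp
    then have "w' ! (len - Suc t) = n - w ! t"
      using rot_nth[of "len - Suc t" w n] t unfolding w'_def len_def by simp
    then show ?thesis using wl[OF t] j by auto
  qed
  show ?thesis
  proof (intro set_eqI iffI)
    fix x assume "x \<in> (\<lambda>s. length w - s) ` cell_slots w j s"
    then obtain y where y: "y \<in> cell_slots w j s" "x = len - y" unfolding len_def by auto
    have yl: "y \<le> len" and yc: "\<forall>t. min s y \<le> t \<and> t < max s y \<longrightarrow> w ! t \<noteq> j"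
      using y(1) unfolding cell_slots_def len_def by auto
    have "\<forall>t. min (len - s) x \<le> t \<and> t < max (len - s) x \<longrightarrow> w' ! t \<noteq> n - j"
    proof (intro allI impI)
      fix t assume ht: "min (len - s) x \<le> t \<and> t < max (len - s) x"
      have tl: "t < len" using ht y(2) s unfolding len_def by (auto simp: max_def split: if_splits)
      define t' where "t' = len - Suc t"
      have t': "t' < len" "t = len - Suc t'" unfolding t'_def using tl by auto
      have "min s y \<le> t' \<and> t' < max s y"
        using interval_flip[of s len y t'] s yl t' ht y(2) unfolding len_def by simp
      then have "w ! t' \<noteq> j" using yc by blast
      then show "w' ! t \<noteq> n - j" using eqv[OF t'(1)] t' by simp
    qed
    then show "x \<in> cell_slots (rot_word n w) (n - j) (length w - s)"
      unfolding cell_slots_def w'_def rot_len using y(2) unfolding len_def by simp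
  next
    fix x assume "x \<in> cell_slots (rot_word n w) (n - j) (length w - s)"
    then have xl: "x \<le> len" and xc: "\<forall>t. min (len - s) x \<le> t \<and> t < max (len - s) x \<longrightarrow> w' ! t \<noteq> n - j"
      unfolding cell_slots_def w'_def rot_len len_def by auto
    have "len - x \<in> cell_slots w j s"
      unfolding cell_slots_def
    proof (intro CollectI conjI allI impI)
      show "len - x \<le> length w" unfolding len_def by simp
      fix t assume ht: "min s (len - x) \<le> t \<and> t < max s (len - x)"
      have tl: "t < len" using ht s unfolding len_def by (auto simp: max_def split: if_splits)
      have "min (len - s) x \<le> len - Suc t \<and> len - Suc t < max (len - s) x"
        using interval_flip[of s len "len - x" t] s xl tl ht unfolding len_def by simp
      then have "w' ! (len - Suc t) \<noteq> n - j" using xc by blast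
      then show "w ! t \<noteq> j" using eqv[OF tl] by simp
    qed
    moreover have "x = len - (len - x)" using xl by simp
    ultimately show "x \<in> (\<lambda>s. length w - s) ` cell_slots w j s" unfolding len_def by blast
  qed
qed

lemma rot_cellc:
  assumes W: "set w \<subseteq> {1..<n}" and j: "j \<le> n" and s: "s \<le> length w"
  shows "rot_cell n w (cellc w j s) = cellc (rot_word n w) (n - j) (length w - s)"
  unfolding rot_cell_def cellc_def using rot_cell_slots[OF W j s] by simp

lemma rot_cell_inv:
  assumes W: "set w \<subseteq> {1..<n}" and j: "j \<le> n" and s: "s \<le> length w"
  shows "rot_cell n (rot_word n w) (rot_cell n w (cellc w j s)) = cellc w j s"
proof -
  have "(\<lambda>s. length w - s) ` (\<lambda>s. length w - s) ` cell_slots w j s = cell_slots w j s"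
  proof -
    have "(\<lambda>s. length w - s) ` (\<lambda>s. length w - s) ` cell_slots w j s = (\<lambda>s. s) ` cell_slots w j s"
      unfolding image_image by (intro image_cong refl) (auto dest: cell_slots_le)
    then show ?thesis by simp
  qed
  then show ?thesis unfolding rot_cell_def cellc_def rot_len using j by simp
qed

lemma cutpath_cells:
  assumes "cutpath n w cs" "i \<le> n"
  shows "\<exists>s. s \<le> length w \<and> cs ! i = cellc w i s"
  using assms(2)
proof (induction i)
  case 0
  then show ?case using assms(1) unfolding cutpath_def north_cell_def by auto
next
  case (Suc i)
  then obtain s where s: "s \<le> length w" "cs ! i = cellc w i s" by auto
  have "cs ! Suc i \<in> exits n w (cs ! i)" using assms(1) Suc.prems unfolding cutpath_def by auto
  then obtain s0 where "s0 \<in> cell_slots w i s" "cs ! Suc i = cellc w (Suc i) s0"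
    unfolding s(2) exits_def by (auto simp: cellc_def split: if_splits)
  then show ?case using cell_slots_le by blast
qed

lemma rot_exit:
  assumes W: "set w \<subseteq> {1..<n}" and j: "j < n" and s: "s \<le> length w"
    and s0: "s0 \<in> cell_slots w j s"
  shows "rot_cell n w (cellc w j s) \<in> exits n (rot_word n w) (rot_cell n w (cellc w (Suc j) s0))"
proof -
  define len where "len = length w"
  define w' where "w' = rot_word n w"
  have s0l: "s0 \<le> len" using s0 cell_slots_le unfolding len_def by blast
  have r1: "rot_cell n w (cellc w (Suc j) s0) = cellc w' (n - Suc j) (len - s0)"
    using rot_cellc[OF W _ s0l[unfolded len_def]] j unfolding w'_def len_def by simp
  have r2: "rot_cell n w (cellc w j s) = cellc w' (n - j) (len - s)"
    using rot_cellc[OF W _ s] j unfolding w'_def len_def by simp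
  have mem: "len - s0 \<in> cell_slots w' (n - j) (len - s)"
  proof -
    have "length w - s0 \<in> (\<lambda>s. length w - s) ` cell_slots w j s" using s0 by blast
    then show ?thesis using rot_cell_slots[OF W _ s, of j] j unfolding w'_def len_def by simp
  qed
  have sl: "Suc (n - Suc j) = n - j" using j by simp
  have "len - s0 \<in> cell_slots w' (n - Suc j) (len - s0)"
    by (rule cell_slots_self) (simp add: w'_def rot_len len_def)
  moreover have "cellc w' (n - j) (len - s0) = cellc w' (n - j) (len - s)"
    unfolding cellc_def using cell_slots_eq[OF mem] by simp
  ultimately show ?thesis
    unfolding r1 r2 w'_def[symmetric] exits_def using j sl
    by (auto simp: cellc_def intro!: image_eqI[where x="len - s0"])
qed

lemma part2:
  assumes W: "set w \<subseteq> {1..<n}"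
  shows "real (card (Gamma n w m k u m' k' u'))
     \<le> real ((n - u') choose k') * (real m' / real (n - u')) ^ k' * 2 ^ (n - k' - u')"
proof -
  define w' where "w' = rot_word n w"
  define len where "len = length w"
  define G where "G = Gamma n w m k u m' k' u'"
  define \<phi> where "\<phi> cs = rev (map (rot_cell n w) cs)" for cs
  define \<psi> where "\<psi> cs = rev (map (rot_cell n w') cs)" for cs
  define c0 where "c0 = cellc w' 0 len"
  have gc0: "gcell w' c0" unfolding c0_def gcell_def w'_def rot_len len_def by auto
  have cp: "cutpath n w cs" if "cs \<in> G" for cs using that unfolding G_def Gamma_def by auto
  have inv: "\<psi> (\<phi> cs) = cs" if cs: "cs \<in> G" for cs
  proof -
    have "\<psi> (\<phi> cs) = map (rot_cell n w' \<circ> rot_cell n w) cs"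
      unfolding \<phi>_def \<psi>_def by (simp add: rev_map[symmetric])
    also have "\<dots> = cs"
    proof (rule map_idI)
      fix x assume "x \<in> set cs"
      then obtain i where i: "i < length cs" "x = cs ! i" by (auto simp: in_set_conv_nth)
      have "i \<le> n" using i cp[OF cs] unfolding cutpath_def by simp
      then obtain s where "s \<le> length w" "cs ! i = cellc w i s"
        using cutpath_cells[OF cp[OF cs]] by blast
      then show "(rot_cell n w' \<circ> rot_cell n w) x = x"
        using rot_cell_inv[OF W \<open>i \<le> n\<close>] i unfolding w'_def by simp
    qed
    finally show ?thesis .
  qed
  have injp: "inj_on \<phi> G" by (rule inj_on_inverseI[of _ \<psi>]) (rule inv)
  have sub: "\<phi> ` G \<subseteq> Pset n w' n c0 m' k' u'"
  proof
    fix y assume "y \<in> \<phi> ` G"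
    then obtain cs where cs: "cs \<in> G" "y = \<phi> cs" by auto
    have cpc: "cutpath n w cs" by (rule cp[OF cs(1)])
    have len_cs: "length cs = Suc n" using cpc unfolding cutpath_def by simp
    have nth\<phi>: "\<phi> cs ! i = rot_cell n w (cs ! (n - i))" if "i \<le> n" for i
      unfolding \<phi>_def using that len_cs by (simp add: rev_nth)
    have st: "path_stats n w' (\<phi> cs) = (m', k', u')"
      using cs(1) unfolding G_def Gamma_def \<phi>_def w'_def by simp
    show "y \<in> Pset n w' n c0 m' k' u'"
      unfolding Pset_def cs(2)
    proof (intro CollectI conjI)
      show "length (\<phi> cs) = Suc n" unfolding \<phi>_def using len_cs by simp
      have "cs ! n = cellc w n 0" using cpc unfolding cutpath_def south_cell_def by simp
      then show "\<phi> cs ! 0 = c0"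
        using nth\<phi>[of 0] rot_cellc[OF W, of n 0] unfolding c0_def w'_def len_def by simp
      show "\<forall>i<n. \<phi> cs ! Suc i \<in> exits n w' (\<phi> cs ! i)"
      proof (intro allI impI)
        fix i assume i: "i < n"
        define q where "q = n - Suc i"
        have q: "q < n" "n - i = Suc q" unfolding q_def using i by auto
        obtain s where s: "s \<le> length w" "cs ! q = cellc w q s"
          using cutpath_cells[OF cpc, of q] q by auto
        have "cs ! Suc q \<in> exits n w (cs ! q)" using cpc q unfolding cutpath_def by auto
        then obtain s0 where s0: "s0 \<in> cell_slots w q s" "cs ! Suc q = cellc w (Suc q) s0"
          unfolding s(2) exits_def using q by (auto simp: cellc_def)
        have "rot_cell n w (cs ! q) \<in> exits n w' (rot_cell n w (cs ! Suc q))"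
          unfolding s(2) s0(2) w'_def by (rule rot_exit[OF W q(1) s(1) s0(1)])
        then show "\<phi> cs ! Suc i \<in> exits n w' (\<phi> cs ! i)"
          using nth\<phi>[of "Suc i"] nth\<phi>[of i] i q unfolding q_def by simp
      qed
      show "sum_list (map (num_middle n w') (\<phi> cs)) = m'"
        using st unfolding path_stats_def by simp
      show "card {i. i < n \<and> is_middle_exit n w' (\<phi> cs ! i) (\<phi> cs ! Suc i)} = k'"
        using st unfolding path_stats_def by simp
      show "card {i. i < n \<and> is_unique_exit n w' (\<phi> cs ! i) (\<phi> cs ! Suc i)} = u'"
        using st unfolding path_stats_def by simp
    qed
  qed
  note mb = main_bound[OF gc0, of n n m' k' u']
  have "card G = card (\<phi> ` G)" using injp by (simp add: card_image)
  also have "\<dots> \<le> card (Pset n w' n c0 m' k' u')" using mb sub by (intro card_mono) auto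
  finally have "real (card G) \<le> real (card (Pset n w' n c0 m' k' u'))" by simp
  also have "\<dots> \<le> bnd n u' m' k'" using mb by simp
  finally show ?thesis unfolding G_def using bnd_final by (rule order_trans)
qed

theorem mainTheorem3:
  fixes n :: nat and w :: "nat list" and m k u m' k' u' :: nat
  assumes "wiring_diagram n w"
  shows "(k \<le> m \<and> k \<le> n - u \<longrightarrow>
            real (card (Gamma n w m k u m' k' u'))
              \<le> real ((n - u) choose k) * (real m / real (n - u)) ^ k * 2 ^ (n - k - u))
       \<and> (k' \<le> m' \<and> k' \<le> n - u' \<longrightarrow>
            real (card (Gamma n w m k u m' k' u'))
              \<le> real ((n - u') choose k') * (real m' / real (n - u')) ^ k' * 2 ^ (n - k' - u'))"
proof -
  have W: "set w \<subseteq> {1..<n}" using assms unfolding wiring_diagram_def by simp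
  show ?thesis using part1 part2[OF W] by blast
qed

end
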